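(* Let $(\mathcal{S},\mathcal{A},r,p)$ be a weakly communicating MDP, $T$ the horizon, $H\ge2$, $\delta\in(0,1)$, and let $(s_t,a_t)_{t=1}^T$ be the state-action sequence generated by Optimistic Q-learning (defined in the context) with parameters $H,\delta$. Let $V^*,Q^*$ be the optimal value and Q-functions of the discounted MDP with discount factor $\gamma=1-1/H$. Then with probability at least $1-\delta$, $$\sum_{t=1}^T\big(Q^*(s_t,a_t)-\gamma V^*(s_t)-r(s_t,a_t)\big)\le 2\,\mathrm{sp}(v^* )\sqrt{2T\ln\tfrac1\delta}+2\,\mathrm{sp}(v^* ).$$
   Context: The MDP has finite state/action sets, known reward $r:\mathcal{S}\times\mathcal{A}\to[0,1]$, unknown kernel $p$; weakly communicating means $\mathcal{S}$ splits into states transient under every stationary policy and a set in which any two states are mutually accessible under some stationary policy. There exist $J^*\in[0,1]$ and $q^*$ with $J^*+q^*(s,a)=r(s,a)+\mathbb{E}_{s'\sim p(\cdot|s,a)}[v^*(s')]$, $v^*(s)=\max_a q^*(s,a)$, and $\mathrm{sp}(v^* )=\max_s v^*(s)-\min_s v^*(s)$. Discounted: $Q^*(s,a)=r(s,a)+\gamma\mathbb{E}_{s'\sim p(\cdot|s,a)}[V^*(s')]$, $V^*(s)=\max_aQ^*(s,a)$. Optimistic Q-learning with parameters $H\ge2,\delta$: $\gamma=1-1/H$, $\hat V_1\equiv H$, $Q_1=\hat Q_1\equiv H$, $n_1\equiv0$, $\alpha_\tau=\frac{H+1}{H+\tau}$, $b_\tau=4\,\mathrm{sp}(v^* )\sqrt{\frac{H}{\tau}\ln\frac{2T}{\delta}}$.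 For $t=1,\dots,T$: from the current state $s_t$ (with $s_1$ arbitrary) take $a_t\in\arg\max_a\hat Q_t(s_t,a)$, observe $s_{t+1}\sim p(\cdot|s_t,a_t)$; set $n_{t+1}(s_t,a_t)=n_t(s_t,a_t)+1$, $\tau=n_{t+1}(s_t,a_t)$, $Q_{t+1}(s_t,a_t)=(1-\alpha_\tau)Q_t(s_t,a_t)+\alpha_\tau[r(s_t,a_t)+\gamma\hat V_t(s_{t+1})+b_\tau]$, $\hat Q_{t+1}(s_t,a_t)=\min\{\hat Q_t(s_t,a_t),Q_{t+1}(s_t,a_t)\}$, $\hat V_{t+1}(s_t)=\max_a\hat Q_{t+1}(s_t,a)$; all other entries unchanged. *)

theory Defs
  imports "HOL-Probability.Probability"
begin

definition pol_kernel :: "('s \<Rightarrow> 'a \<Rightarrow> 's pmf) \<Rightarrow> ('s \<Rightarrow> 'a pmf) \<Rightarrow> 's \<Rightarrow> 's pmf" where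
  "pol_kernel p \<pi> x = bind_pmf (\<pi> x) (\<lambda>a. p x a)"

definition reach :: "('s \<Rightarrow> 'a \<Rightarrow> 's pmf) \<Rightarrow> ('s \<Rightarrow> 'a pmf) \<Rightarrow> ('s \<times> 's) set" where
  "reach p \<pi> = {(x, y). y \<in> set_pmf (pol_kernel p \<pi> x)}\<^sup>*"

definition transient_under :: "('s \<Rightarrow> 'a \<Rightarrow> 's pmf) \<Rightarrow> ('s \<Rightarrow> 'a pmf) \<Rightarrow> 's \<Rightarrow> bool" where
  "transient_under p \<pi> s = (\<exists>y. (s, y) \<in> reach p \<pi> \<and> (y, s) \<notin> reach p \<pi>)"

definition weakly_communicating :: "('s \<Rightarrow> 'a \<Rightarrow> 's pmf) \<Rightarrow> bool" where
  "weakly_communicating p = (\<exists>Tr C. Tr \<inter> C = {} \<and> Tr \<union> C = UNIV \<and>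
      (\<forall>s\<in>Tr. \<forall>\<pi>. transient_under p \<pi> s) \<and>
      (\<forall>x\<in>C. \<forall>y\<in>C. \<exists>\<pi>. (x, y) \<in> reach p \<pi> \<and> (y, x) \<in> reach p \<pi>))"

definition spread :: "('s::finite \<Rightarrow> real) \<Rightarrow> real" where
  "spread v = Max (range v) - Min (range v)"

record ('s, 'a) qstate =
  Qv  :: "'s \<Rightarrow> 'a \<Rightarrow> real"
  Qh  :: "'s \<Rightarrow> 'a \<Rightarrow> real"
  Vh  :: "'s \<Rightarrow> real"
  cnt :: "'s \<Rightarrow> 'a \<Rightarrow> nat"
  cur :: 's
  time :: nat

definition ql_alpha :: "real \<Rightarrow> nat \<Rightarrow> real" where
  "ql_alpha H \<tau> = (H + 1) / (H + real \<tau>)"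

text \<open>Bonus \<open>b_\<tau>\<close>; \<open>spv\<close> is \<open>sp(v*)\<close>.\<close>
definition ql_bonus :: "real \<Rightarrow> real \<Rightarrow> nat \<Rightarrow> real \<Rightarrow> nat \<Rightarrow> real" where
  "ql_bonus spv H T \<delta> \<tau> = 4 * spv * sqrt (H / real \<tau> * ln (2 * real T / \<delta>))"

definition ql_init :: "real \<Rightarrow> 's \<Rightarrow> ('s, 'a) qstate" where
  "ql_init H s1 = \<lparr> Qv = (\<lambda>_ _. H), Qh = (\<lambda>_ _. H), Vh = (\<lambda>_. H),
                   cnt = (\<lambda>_ _. 0), cur = s1, time = 1 \<rparr>"

definition ql_update :: "('s \<Rightarrow> 'a \<Rightarrow> real) \<Rightarrow> real \<Rightarrow> real \<Rightarrow> nat \<Rightarrow> real \<Rightarrow>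
    ('s, 'a::finite) qstate \<Rightarrow> 'a \<Rightarrow> 's \<Rightarrow> ('s, 'a) qstate" where
  "ql_update r spv H T \<delta> \<sigma> a s' =
     (let s = cur \<sigma>; \<gamma> = 1 - 1 / H; \<tau> = cnt \<sigma> s a + 1; \<alpha> = ql_alpha H \<tau>;
          qn = (1 - \<alpha>) * Qv \<sigma> s a + \<alpha> * (r s a + \<gamma> * Vh \<sigma> s' + ql_bonus spv H T \<delta> \<tau>);
          qh' = (Qh \<sigma>)(s := (Qh \<sigma> s)(a := min (Qh \<sigma> s a) qn))
      in \<lparr> Qv = (Qv \<sigma>)(s := (Qv \<sigma> s)(a := qn)),
           Qh = qh',
           Vh = (Vh \<sigma>)(s := Max (range (qh' s))),
           cnt = (cnt \<sigma>)(s := (cnt \<sigma> s)(a := \<tau>)),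
           cur = s',
           time = Suc (time \<sigma>) \<rparr>)"

text \<open>Distribution of the next \<open>k\<close> state-action pairs generated by the algorithm from
  algorithm state \<open>\<sigma>\<close>; \<open>tb\<close> is the (arbitrary) greedy tie-breaking rule.\<close>
fun ql_run :: "('s \<Rightarrow> 'a \<Rightarrow> real) \<Rightarrow> ('s \<Rightarrow> 'a \<Rightarrow> 's pmf) \<Rightarrow> real \<Rightarrow> real \<Rightarrow> nat \<Rightarrow> real \<Rightarrow>
    (('s, 'a::finite) qstate \<Rightarrow> 'a) \<Rightarrow> nat \<Rightarrow> ('s, 'a) qstate \<Rightarrow> ('s \<times> 'a) list pmf" where
  "ql_run r p spv H T \<delta> tb 0 \<sigma> = return_pmf []"
| "ql_run r p spv H T \<delta> tb (Suc k) \<sigma> =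
     bind_pmf (p (cur \<sigma>) (tb \<sigma>)) (\<lambda>s'.
       map_pmf (\<lambda>xs. (cur \<sigma>, tb \<sigma>) # xs)
         (ql_run r p spv H T \<delta> tb k (ql_update r spv H T \<delta> \<sigma> (tb \<sigma>) s')))"

end

theory Submission
  imports Defs
begin

lemma E_integrable[simp]:
  fixes P :: "'s::finite pmf"
  shows "integrable (measure_pmf P) (f :: 's \<Rightarrow> real)"
  by (rule integrable_measure_pmf_finite) simp

lemma E_mono:
  fixes P :: "'s::finite pmf" and f g :: "'s \<Rightarrow> real"
  assumes "\<And>x. f x \<le> g x"
  shows "measure_pmf.expectation P f \<le> measure_pmf.expectation P g"
  using assms by (intro integral_mono) auto

lemma E_add_const:
  fixes P :: "'s::finite pmf" and f :: "'s \<Rightarrow> real"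
  shows "measure_pmf.expectation P (\<lambda>x. f x + c) = measure_pmf.expectation P f + c"
  by (simp add: Bochner_Integration.integral_add)

lemma E_const:
  fixes P :: "'s::finite pmf"
  shows "measure_pmf.expectation P (\<lambda>x. c) = (c::real)"
  by simp

lemma E_ge_const:
  fixes P :: "'s::finite pmf" and f :: "'s \<Rightarrow> real"
  assumes "\<And>x. m \<le> f x"
  shows "m \<le> measure_pmf.expectation P f"
  using E_mono[of "\<lambda>_. m" f P] assms by simp

lemma E_le_const:
  fixes P :: "'s::finite pmf" and f :: "'s \<Rightarrow> real"
  assumes "\<And>x. f x \<le> m"
  shows "measure_pmf.expectation P f \<le> m"
  using E_mono[of f "\<lambda>_. m" P] assms by simp

lemma VS_upper:
  fixes r :: "'s::finite \<Rightarrow> 'a::finite \<Rightarrow> real"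
    and p :: "'s \<Rightarrow> 'a \<Rightarrow> 's pmf"
  assumes avg_bellman: "\<And>s a. J + q s a = r s a + measure_pmf.expectation (p s a) v"
    and v_def: "\<And>s. v s = Max (range (q s))"
    and H: "H \<ge> 2"
    and disc_Q: "\<And>s a. QS s a = r s a + (1 - 1 / H) * measure_pmf.expectation (p s a) VS"
    and disc_V: "\<And>s. VS s = Max (range (QS s))"
  shows "VS s \<le> J * H + v s - Min (range v)"
proof -
  define g where "g = 1 - 1 / H"
  define mv where "mv = Min (range v)"
  have g0: "0 \<le> g" "g < 1" using H by (auto simp: g_def)
  have gH: "g * H = H - 1" using H by (simp add: g_def field_simps)
  have gJ: "g * J * H = (H - 1) * J"
  proof -
    have "g * J * H = J * (g * H)" by simp
    also have "\<dots> = (H - 1) * J" by (simp add: gH)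
    finally show ?thesis .
  qed
  have mv: "\<And>s. mv \<le> v s" by (simp add: mv_def)
  define D where "D s = VS s - (J * H + v s - mv)" for s
  define M where "M = Max (range D)"
  have DM: "\<And>s. D s \<le> M" by (simp add: M_def)
  have key: "D s \<le> g * M" for s
  proof -
    have "QS s a \<le> J * H + v s - mv + g * M" for a
    proof -
      have qv: "q s a \<le> v s" by (simp add: v_def)
      have E1: "measure_pmf.expectation (p s a) VS \<le> measure_pmf.expectation (p s a) (\<lambda>x. v x + (J * H - mv + M))"
        using DM by (intro E_mono) (simp add: D_def algebra_simps)
      have E2: "mv \<le> measure_pmf.expectation (p s a) v" using mv by (intro E_ge_const) 
      define Ev where "Ev = measure_pmf.expectation (p s a) v"
      have E1': "measure_pmf.expectation (p s a) VS \<le> Ev + (J * H - mv + M)"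
        using E1 by (simp add: E_add_const Ev_def)
      have "QS s a \<le> r s a + g * (Ev + (J * H - mv + M))"
        using disc_Q[of s a] E1' g0 by (simp add: g_def[symmetric] mult_left_mono)
      also have "r s a = J + q s a - Ev" using avg_bellman[of s a] by (simp add: Ev_def)
      finally have "QS s a \<le> J + q s a - Ev + g * Ev + g * J * H - g * mv + g * M"
        by (simp add: algebra_simps)
      also have "\<dots> = J + q s a - (1 - g) * Ev + (H - 1) * J - g * mv + g * M"
        using gJ by (simp add: algebra_simps)
      also have "\<dots> \<le> J + v s - (1 - g) * mv + (H - 1) * J - g * mv + g * M"
      proof -
        have "(1 - g) * mv \<le> (1 - g) * Ev" using E2 g0 by (intro mult_left_mono) (auto simp: Ev_def)
        thus ?thesis using qv by linarith
      qed
      finally show ?thesis by (simp add: algebra_simps)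
    qed
    hence "VS s \<le> J * H + v s - mv + g * M" by (simp add: disc_V)
    thus ?thesis by (simp add: D_def)
  qed
  have "M \<in> range D" unfolding M_def by (rule Max_in) auto
  then obtain s0 where "M = D s0" by auto
  hence "M \<le> g * M" using key[of s0] by simp
  hence "(1 - g) * M \<le> 0" by (simp add: algebra_simps)
  hence "M \<le> 0" using g0 by (simp add: mult_le_0_iff)
  with DM[of s] show ?thesis by (simp add: D_def mv_def)
qed

lemma VS_lower:
  fixes r :: "'s::finite \<Rightarrow> 'a::finite \<Rightarrow> real"
    and p :: "'s \<Rightarrow> 'a \<Rightarrow> 's pmf"
  assumes avg_bellman: "\<And>s a. J + q s a = r s a + measure_pmf.expectation (p s a) v"
    and v_def: "\<And>s. v s = Max (range (q s))"
    and H: "H \<ge> 2"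
    and disc_Q: "\<And>s a. QS s a = r s a + (1 - 1 / H) * measure_pmf.expectation (p s a) VS"
    and disc_V: "\<And>s. VS s = Max (range (QS s))"
  shows "J * H + v s - Max (range v) \<le> VS s"
proof -
  define g where "g = 1 - 1 / H"
  define mv where "mv = Max (range v)"
  have g0: "0 \<le> g" "g < 1" using H by (auto simp: g_def)
  have gH: "g * H = H - 1" using H by (simp add: g_def field_simps)
  have gJ: "g * J * H = (H - 1) * J"
  proof -
    have "g * J * H = J * (g * H)" by simp
    also have "\<dots> = (H - 1) * J" by (simp add: gH)
    finally show ?thesis .
  qed
  have mv: "\<And>s. v s \<le> mv" by (simp add: mv_def)
  define D where "D s = (J * H + v s - mv) - VS s" for s
  define M where "M = Max (range D)"
  have DM: "\<And>s. D s \<le> M" by (simp add: M_def)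
  have key: "D s \<le> g * M" for s
  proof -
    have "v s \<in> range (q s)" unfolding v_def by (rule Max_in) auto
    then obtain a where qv: "q s a = v s" by auto
    have "J * H + v s - mv - g * M \<le> QS s a"
    proof -
      have E1: "measure_pmf.expectation (p s a) (\<lambda>x. v x + (J * H - mv - M)) \<le> measure_pmf.expectation (p s a) VS"
        using DM by (intro E_mono) (simp add: D_def algebra_simps)
      have E2: "measure_pmf.expectation (p s a) v \<le> mv" using mv by (intro E_le_const) 
      define Ev where "Ev = measure_pmf.expectation (p s a) v"
      have E1': "Ev + (J * H - mv - M) \<le> measure_pmf.expectation (p s a) VS"
        using E1 by (simp add: E_add_const Ev_def)
      have "r s a + g * (Ev + (J * H - mv - M)) \<le> QS s a"
        using disc_Q[of s a] E1' g0 by (simp add: g_def[symmetric] mult_left_mono)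
      moreover have "r s a = J + q s a - Ev" using avg_bellman[of s a] by (simp add: Ev_def)
      ultimately have "J + q s a - Ev + g * Ev + g * J * H - g * mv - g * M \<le> QS s a"
        by (simp add: algebra_simps)
      moreover have "J + q s a - Ev + g * Ev + g * J * H - g * mv - g * M = J + q s a - (1 - g) * Ev + (H - 1) * J - g * mv - g * M"
        using gJ by (simp add: algebra_simps)
      moreover have "J + v s - (1 - g) * mv + (H - 1) * J - g * mv - g * M \<le> J + q s a - (1 - g) * Ev + (H - 1) * J - g * mv - g * M"
        using qv E2 g0 by (simp add: Ev_def mult_left_mono)
      ultimately show ?thesis by (simp add: algebra_simps)
    qed
    also have "QS s a \<le> VS s" by (simp add: disc_V)
    finally show ?thesis by (simp add: D_def)
  qed
  have "M \<in> range D" unfolding M_def by (rule Max_in) auto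
  then obtain s0 where "M = D s0" by auto
  hence "M \<le> g * M" using key[of s0] by simp
  hence "(1 - g) * M \<le> 0" by (simp add: algebra_simps)
  hence "M \<le> 0" using g0 by (simp add: mult_le_0_iff)
  with DM[of s] show ?thesis by (simp add: D_def mv_def)
qed


lemma hoeff_step:
  fixes P :: "'s::finite pmf" and W :: "'s \<Rightarrow> real"
  assumes l: "l > 0"
  shows "(\<integral>\<^sup>+x. ennreal (exp (l * (measure_pmf.expectation P W - W x))) \<partial>P)
     \<le> ennreal (exp (l\<^sup>2 * (Max (range W) - Min (range W))\<^sup>2 / 8))"
proof -
  define A where "A = - Max (range W)"
  define B where "B = - Min (range W)"
  have ibrv: "interval_bounded_random_variable (measure_pmf P) (\<lambda>x. - W x) A B"
    by unfold_locales (auto simp: A_def B_def)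
  have 1: "(\<integral>\<^sup>+x. ennreal (exp (l * (- W x - measure_pmf.expectation P (\<lambda>x. - W x)))) \<partial>P)
     \<le> ennreal (exp (l\<^sup>2 * (B - A)\<^sup>2 / 8))"
    by (rule interval_bounded_random_variable.Hoeffdings_lemma_nn_integral[OF ibrv l])
  have 2: "measure_pmf.expectation P (\<lambda>x. - W x) = - measure_pmf.expectation P W" by simp
  have 3: "B - A = Max (range W) - Min (range W)" unfolding A_def B_def by linarith
  have 4: "\<And>x. - W x - - measure_pmf.expectation P W = measure_pmf.expectation P W - W x" by simp
  show ?thesis using 1 unfolding 2 3 4 .
qed


lemma cur_ql_update[simp]: "cur (ql_update r spv H T \<delta> \<sigma> a s') = s'"
  by (simp add: ql_update_def Let_def)

lemma run_mgf:
  fixes p :: "'s::finite \<Rightarrow> 'a::finite \<Rightarrow> 's pmf" and W :: "'s \<Rightarrow> real"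
  assumes l: "l > 0"
  shows "(\<integral>\<^sup>+xs. ennreal (exp (l * (sum_list (map (\<lambda>(s,a). measure_pmf.expectation (p s a) W - W s) xs) + W (cur \<sigma>))))
            \<partial>ql_run r p spv H T \<delta> tb k \<sigma>)
     \<le> ennreal (exp (l\<^sup>2 * (Max (range W) - Min (range W))\<^sup>2 / 8 * real k + l * Max (range W)))"
proof (induction k arbitrary: \<sigma>)
  case 0
  have "W (cur \<sigma>) \<le> Max (range W)" by simp
  hence "l * W (cur \<sigma>) \<le> l * Max (range W)" using l by (intro mult_left_mono) auto
  then show ?case by (simp add: ennreal_leI)
next
  case (Suc k)
  define gg where "gg = (\<lambda>(s,a). measure_pmf.expectation (p s a) W - W s)"
  define C where "C = l\<^sup>2 * (Max (range W) - Min (range W))\<^sup>2 / 8"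
  define K where "K = exp (C * real k + l * Max (range W))"
  define s where "s = cur \<sigma>"
  define a where "a = tb \<sigma>"
  define EW where "EW = measure_pmf.expectation (p s a) W"
  have IH: "\<And>\<sigma>. (\<integral>\<^sup>+xs. ennreal (exp (l * (sum_list (map gg xs) + W (cur \<sigma>))))
            \<partial>ql_run r p spv H T \<delta> tb k \<sigma>) \<le> ennreal K"
    using Suc.IH unfolding gg_def C_def K_def .
  have inner: "(\<integral>\<^sup>+xs. ennreal (exp (l * (gg (s, a) + sum_list (map gg xs) + W s)))
            \<partial>ql_run r p spv H T \<delta> tb k (ql_update r spv H T \<delta> \<sigma> a s'))
       \<le> ennreal (exp (l * (EW - W s'))) * ennreal K" for s'
  proof -
    have eq: "ennreal (exp (l * (gg (s, a) + sum_list (map gg xs) + W s))) =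
       ennreal (exp (l * (EW - W s'))) * ennreal (exp (l * (sum_list (map gg xs) + W s')))" for xs
    proof -
      have "exp (l * (gg (s, a) + sum_list (map gg xs) + W s)) =
        exp (l * (EW - W s')) * exp (l * (sum_list (map gg xs) + W s'))"
        unfolding exp_add[symmetric] by (simp add: gg_def EW_def algebra_simps)
      thus ?thesis by (simp add: ennreal_mult)
    qed
    have "(\<integral>\<^sup>+xs. ennreal (exp (l * (gg (s, a) + sum_list (map gg xs) + W s)))
            \<partial>ql_run r p spv H T \<delta> tb k (ql_update r spv H T \<delta> \<sigma> a s'))
        = ennreal (exp (l * (EW - W s'))) * (\<integral>\<^sup>+xs. ennreal (exp (l * (sum_list (map gg xs) + W s')))
            \<partial>ql_run r p spv H T \<delta> tb k (ql_update r spv H T \<delta> \<sigma> a s'))"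
      unfolding eq by (rule nn_integral_cmult) simp
    also have "\<dots> \<le> ennreal (exp (l * (EW - W s'))) * ennreal K"
      using IH[of "ql_update r spv H T \<delta> \<sigma> a s'"] by (intro mult_left_mono) auto
    finally show ?thesis .
  qed
  have "(\<integral>\<^sup>+xs. ennreal (exp (l * (sum_list (map gg xs) + W (cur \<sigma>)))) \<partial>ql_run r p spv H T \<delta> tb (Suc k) \<sigma>)
      = (\<integral>\<^sup>+s'. (\<integral>\<^sup>+xs. ennreal (exp (l * (gg (s, a) + sum_list (map gg xs) + W s)))
            \<partial>ql_run r p spv H T \<delta> tb k (ql_update r spv H T \<delta> \<sigma> a s')) \<partial>p s a)"
    by (simp add: s_def a_def add.assoc)
  also have "\<dots> \<le> (\<integral>\<^sup>+s'. ennreal (exp (l * (EW - W s'))) * ennreal K \<partial>p s a)"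
    by (intro nn_integral_mono inner)
  also have "\<dots> = (\<integral>\<^sup>+s'. ennreal (exp (l * (EW - W s'))) \<partial>p s a) * ennreal K"
    by (rule nn_integral_multc) simp
  also have "\<dots> \<le> ennreal (exp C) * ennreal K"
    using hoeff_step[OF l, of "p s a" W] unfolding EW_def C_def by (intro mult_right_mono) auto
  also have "\<dots> = ennreal (exp (C * real (Suc k) + l * Max (range W)))"
    by (simp add: K_def exp_add ennreal_mult algebra_simps)
  finally show ?case unfolding gg_def C_def .
qed

theorem lemma3:
  fixes r :: "'s::finite \<Rightarrow> 'a::finite \<Rightarrow> real"
    and p :: "'s \<Rightarrow> 'a \<Rightarrow> 's pmf"
    and J :: real and q :: "'s \<Rightarrow> 'a \<Rightarrow> real" and v :: "'s \<Rightarrow> real"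
    and QS :: "'s \<Rightarrow> 'a \<Rightarrow> real" and VS :: "'s \<Rightarrow> real"
    and H \<delta> :: real and T :: nat and s1 :: 's
    and tb :: "('s, 'a) qstate \<Rightarrow> 'a"
  assumes r_range: "\<And>s a. 0 \<le> r s a \<and> r s a \<le> 1"
    and wc: "weakly_communicating p"
    and J_range: "0 \<le> J \<and> J \<le> 1"
    and avg_bellman: "\<And>s a. J + q s a = r s a + measure_pmf.expectation (p s a) v"
    and v_def: "\<And>s. v s = Max (range (q s))"
    and H: "H \<ge> 2"
    and \<delta>: "0 < \<delta>" "\<delta> < 1"
    and disc_Q: "\<And>s a. QS s a = r s a + (1 - 1 / H) * measure_pmf.expectation (p s a) VS"
    and disc_V: "\<And>s. VS s = Max (range (QS s))"
    and greedy: "\<And>\<sigma>. Qh \<sigma> (cur \<sigma>) (tb \<sigma>) = Max (range (Qh \<sigma> (cur \<sigma>)))"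
  shows "measure_pmf.prob (ql_run r p (spread v) H T \<delta> tb T (ql_init H s1))
           {xs. (\<Sum>(s, a)\<leftarrow>xs. QS s a - (1 - 1 / H) * VS s - r s a)
                  \<le> 2 * spread v * sqrt (2 * real T * ln (1 / \<delta>)) + 2 * spread v}
         \<ge> 1 - \<delta>"
proof -
  define g where "g = 1 - 1 / H"
  have g0: "0 < g" "g \<le> 1" using H by (auto simp: g_def)
  define W where "W = VS"
  define MW where "MW = Max (range W)"
  define mW where "mW = Min (range W)"
  define c where "c = MW - mW"
  define sp where "sp = spread v"
  define gg where "gg = (\<lambda>(s,a). measure_pmf.expectation (p s a) W - W s)"
  define Sg where "Sg xs = sum_list (map gg xs)" for xs
  define B where "B = 2 * sp * sqrt (2 * real T * ln (1 / \<delta>)) + 2 * sp"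
  define R where "R = ql_run r p (spread v) H T \<delta> tb T (ql_init H s1)"
  have sum_eq: "(\<Sum>(s, a)\<leftarrow>xs. QS s a - (1 - 1 / H) * VS s - r s a) = g * Sg xs" for xs
  proof -
    have step: "QS s a - (1 - 1 / H) * VS s - r s a = g * gg (s, a)" for s a
      by (simp add: disc_Q gg_def W_def g_def algebra_simps)
    have fe: "(\<lambda>(s, a). QS s a - (1 - 1 / H) * VS s - r s a) = (\<lambda>x. g * gg x)"
      by (auto simp: step)
    show ?thesis unfolding fe by (simp add: Sg_def sum_list_const_mult)
  qed
  have sp_def': "sp = Max (range v) - Min (range v)" by (simp add: sp_def spread_def)
  have sp0: "0 \<le> sp" unfolding sp_def'
  proof -
    have "v s1 \<le> Max (range v)" "Min (range v) \<le> v s1" by auto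
    thus "0 \<le> Max (range v) - Min (range v)" by linarith
  qed
  have Wb: "mW \<le> W x" "W x \<le> MW" for x by (auto simp: mW_def MW_def)
  have c0: "0 \<le> c" using Wb[of s1] by (simp add: c_def)
  have csp: "c \<le> 2 * sp"
  proof -
    have "MW \<in> range W" unfolding MW_def by (rule Max_in) auto
    then obtain x1 where x1: "MW = VS x1" by (auto simp: W_def)
    have "mW \<in> range W" unfolding mW_def by (rule Min_in) auto
    then obtain x2 where x2: "mW = VS x2" by (auto simp: W_def)
    have u: "VS x1 \<le> J * H + v x1 - Min (range v)"
      by (rule VS_upper[OF avg_bellman v_def H disc_Q disc_V])
    have lo: "J * H + v x2 - Max (range v) \<le> VS x2"
      by (rule VS_lower[OF avg_bellman v_def H disc_Q disc_V])
    have "v x1 \<le> Max (range v)" "Min (range v) \<le> v x2" by auto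
    note vv = this
    have "VS x1 - VS x2 \<le> (J * H + v x1 - Min (range v)) - (J * H + v x2 - Max (range v))"
      using u lo by (rule diff_mono)
    also have "\<dots> = (v x1 - v x2) + (Max (range v) - Min (range v))" by simp
    also have "\<dots> \<le> (Max (range v) - Min (range v)) + (Max (range v) - Min (range v))"
      using vv by (intro add_right_mono diff_mono)
    finally have "VS x1 - VS x2 \<le> 2 * (Max (range v) - Min (range v))" by (simp only: mult_2)
    thus ?thesis by (simp only: c_def sp_def' x1 x2)
  qed
  have L0: "0 < ln (1 / \<delta>)" using \<delta> by simp
  have B0: "0 \<le> B" unfolding B_def using sp0 L0 by simp
  have goodset: "{xs. (\<Sum>(s, a)\<leftarrow>xs. QS s a - (1 - 1 / H) * VS s - r s a) \<le> 2 * spread v * sqrt (2 * real T * ln (1 / \<delta>)) + 2 * spread v}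
     = {xs. g * Sg xs \<le> B}" by (simp add: sum_eq B_def sp_def)
  have compl: "measure_pmf.prob R {xs. g * Sg xs \<le> B} = 1 - measure_pmf.prob R (UNIV - {xs. g * Sg xs \<le> B})"
    using measure_pmf.prob_compl[of "UNIV - {xs. g * Sg xs \<le> B}" R] by (simp add: Diff_Diff_Int)
  have bad: "measure_pmf.prob R (UNIV - {xs. g * Sg xs \<le> B}) \<le> \<delta>"
  proof (cases "T = 0 \<or> sp = 0")
    case True
    then show ?thesis
    proof
      assume "T = 0"
      hence "R = return_pmf []" by (simp add: R_def)
      thus ?thesis using B0 \<delta> by (simp add: Sg_def)
    next
      assume "sp = 0"
      hence "c = 0" using csp c0 by simp
      have Wc: "W = (\<lambda>_. MW)"
      proof (rule ext)
        fix x show "W x = MW" using Wb[of x] \<open>c = 0\<close> unfolding c_def by linarith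
      qed
      hence "gg = (\<lambda>_. 0)" by (auto simp: gg_def)
      hence "Sg xs = 0" for xs by (simp add: Sg_def)
      thus ?thesis using B0 \<delta> by simp
    qed
  next
    case False
    hence T0: "0 < real T" and spp: "0 < sp" using sp0 by auto
    define L where "L = ln (1 / \<delta>)"
    define S where "S = sqrt (2 * real T * L)"
    define c0 where "c0 = 2 * sp"
    define l where "l = 2 * S / (real T * c0)"
    have L0': "0 < L" using L0 by (simp add: L_def)
    have S0: "0 < S" using T0 L0' by (simp add: S_def)
    have c00: "0 < c0" using spp by (simp add: c0_def)
    have l0: "0 < l" using S0 T0 c00 by (simp add: l_def)
    define C where "C = l\<^sup>2 * c\<^sup>2 / 8"
    define t where "t = B + mW"
    have sub: "UNIV - {xs. g * Sg xs \<le> B} \<subseteq> {xs. t \<le> Sg xs + W s1}"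
    proof
      fix xs assume "xs \<in> UNIV - {xs. g * Sg xs \<le> B}"
      hence gt: "B < g * Sg xs" by simp
      hence "0 < g * Sg xs" using B0 by linarith
      hence "0 < Sg xs" using g0 by (simp add: zero_less_mult_iff)
      hence "g * Sg xs \<le> Sg xs" using g0 by (simp add: mult_le_cancel_right1)
      moreover have "mW \<le> W s1" by (rule Wb)
      ultimately show "xs \<in> {xs. t \<le> Sg xs + W s1}" using gt unfolding mem_Collect_eq t_def by linarith
    qed
    have ind: "indicator {xs. t \<le> Sg xs + W s1} xs
        \<le> ennreal (exp (- l * t)) * ennreal (exp (l * (Sg xs + W s1)))" for xs
    proof (cases "t \<le> Sg xs + W s1")
      case True
      have "1 \<le> exp (- l * t) * exp (l * (Sg xs + W s1))"
      proof -
        have "l * t \<le> l * (Sg xs + W s1)" using True l0 by (intro mult_left_mono) auto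
        hence "0 \<le> - l * t + l * (Sg xs + W s1)" by simp
        thus ?thesis unfolding exp_add[symmetric] by simp
      qed
      then show ?thesis using True by (simp add: ennreal_mult[symmetric])
    qed simp
    have "emeasure R {xs. t \<le> Sg xs + W s1}
        = (\<integral>\<^sup>+xs. indicator {xs. t \<le> Sg xs + W s1} xs \<partial>R)"
      by simp
    also have "\<dots> \<le> (\<integral>\<^sup>+xs. ennreal (exp (- l * t)) * ennreal (exp (l * (Sg xs + W s1))) \<partial>R)"
      by (intro nn_integral_mono ind)
    also have "\<dots> = ennreal (exp (- l * t)) * (\<integral>\<^sup>+xs. ennreal (exp (l * (Sg xs + W s1))) \<partial>R)"
      by (rule nn_integral_cmult) simp
    also have "\<dots> \<le> ennreal (exp (- l * t)) * ennreal (exp (C * real T + l * MW))"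
      using run_mgf[OF l0, where p=p and W=W and r=r and spv="spread v" and H=H and T=T and \<delta>=\<delta> and tb=tb and k=T and \<sigma>="ql_init H s1"]
      by (intro mult_left_mono) (simp_all add: R_def Sg_def gg_def C_def c_def MW_def mW_def ql_init_def)
    also have "\<dots> = ennreal (exp (- l * t) * exp (C * real T + l * MW))"
      by (rule ennreal_mult[symmetric]) auto
    also have "\<dots> = ennreal (exp (- l * t + (C * real T + l * MW)))"
      by (simp only: exp_add)
    finally have em: "measure_pmf.prob R {xs. t \<le> Sg xs + W s1} \<le> exp (- l * t + (C * real T + l * MW))"
      by (simp add: measure_pmf.emeasure_eq_measure)
    have expo: "- l * t + (C * real T + l * MW) \<le> - L"
    proof -
      have lc0: "l * c0 = 2 * S / real T" using T0 c00 by (simp add: l_def field_simps)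
      have SS: "S\<^sup>2 = 2 * real T * L" using T0 L0' by (simp add: S_def)
      have "c\<^sup>2 \<le> c0\<^sup>2" using c0 csp by (intro power_mono) (auto simp: c0_def)
      hence "C * real T \<le> (l * c0)\<^sup>2 * real T / 8"
      proof -
        have "l\<^sup>2 * c\<^sup>2 \<le> l\<^sup>2 * c0\<^sup>2" by (rule mult_left_mono) (use \<open>c\<^sup>2 \<le> c0\<^sup>2\<close> in auto)
        hence "l\<^sup>2 * c\<^sup>2 * real T \<le> l\<^sup>2 * c0\<^sup>2 * real T" using T0 by (intro mult_right_mono) auto
        thus ?thesis by (simp add: C_def power_mult_distrib)
      qed
      also have "\<dots> = L" unfolding lc0 using T0 SS by (simp add: power_divide field_simps power2_eq_square)
      finally have e1: "C * real T \<le> L" .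
      have e2: "l * c \<le> l * c0" using l0 csp by (simp add: c0_def)
      have e3: "l * B = 4 * L + l * c0"
      proof -
        have "B = c0 * S + c0" by (simp add: B_def c0_def S_def L_def sp_def)
        hence "l * B = (l * c0) * S + l * c0" by (simp add: algebra_simps)
        also have "(l * c0) * S = 2 * S\<^sup>2 / real T" unfolding lc0 by (simp add: power2_eq_square)
        also have "\<dots> = 4 * L" unfolding SS using T0 by simp
        finally show ?thesis .
      qed
      have "- l * t + (C * real T + l * MW) = C * real T + l * c - l * B"
        by (simp add: t_def c_def algebra_simps)
      thus ?thesis using e1 e2 e3 L0' by linarith
    qed
    have "exp (- l * t + (C * real T + l * MW)) \<le> exp (- L)" using expo by simp
    also have "exp (- L) = \<delta>" using \<delta> by (simp add: L_def ln_div)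
    finally have "measure_pmf.prob R {xs. t \<le> Sg xs + W s1} \<le> \<delta>" using em by linarith
    moreover have "measure_pmf.prob R (UNIV - {xs. g * Sg xs \<le> B}) \<le> measure_pmf.prob R {xs. t \<le> Sg xs + W s1}"
      using sub by (intro measure_pmf.finite_measure_mono) auto
    ultimately show ?thesis by linarith
  qed
  show ?thesis unfolding goodset R_def[symmetric] compl using bad by linarith
qed

end
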